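(* There is no set $\Lambda$ of $\mathcal L$-formulas such that, for every playable $Ł_n$-frame $\mathfrak F$, $\mathfrak F$ is truly playable if and only if every formula of $\Lambda$ is valid in $\mathfrak F$.
   Context: $Ł_n=\{0,\frac1n,\dots,1\}$ with $\neg x=1-x$, $x\oplus y=\min(x+y,1)$, $x\odot y=\max(x+y-1,0)$, $x\to y=\min(1,1-x+y)$, $\wedge=\min$, applied pointwise. $N$ finite set of players, $|N|\ge2$. An $Ł_n$-valued effectivity function on a set $S$ is a map $E:\mathcal P N\times Ł_n^S\to Ł_n$. It is: outcome monotonic if $f\ge g$ implies $E(C,f)\ge E(C,g)$; $N$-maximal if $\neg E(\varnothing,\neg f)\le E(N,f)$; superadditive if $E(C_1,f)\wedge E(C_2,g)\le E(C_1\cup C_2,f\wedge g)$ whenever $C_1\cap C_2=\varnothing$; homogeneous if $E(C,f\oplus f)=E(C,f)\oplus E(C,f)$ and $E(C,f\odot f)=E(C,f)\odot E(C,f)$; has liveness if $E(C,1)=1$ for all $C$; has safety if $E(C,0)=0$ for all $C$; principal if there is $g$ with $\{f\mid E(\varnothing,f)=1\}=\{f\mid f\ge g\odot\cdots\odot g\ (n\text{ factors})\}$. Playable: first six properties; truly playable: playable and principal. Formulas of $\mathcal L$: $\phi::=1\mid p\mid\phi\to\phi\mid\neg\phi\mid[C]\phi$ ($p$ in a countably infinite set $\mathsf{Prop}$, $C\subseteq N$). An $Ł_n$-frame is $(S,E)$ with $S\ne\varnothing$ and $E(u)$ an $Ł_n$-valued effectivity function on $S$ for each $u\in S$; it is (truly)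 playable if every $E(u)$ is. A model on it adds $\mathrm{Val}:S\times\mathsf{Prop}\to Ł_n$, extended by $\mathrm{Val}(u,1)=1$, $\mathrm{Val}(u,\neg\phi)=\neg\mathrm{Val}(u,\phi)$, $\mathrm{Val}(u,\phi\to\psi)=\mathrm{Val}(u,\phi)\to\mathrm{Val}(u,\psi)$, $\mathrm{Val}(u,[C]\phi)=E(u)(C,\mathrm{Val}(-,\phi))$. A formula is true in a model if its value is $1$ at every state, and valid in a frame if true in every model based on the frame. *)

theory Defs
  imports Complex_Main "HOL-Library.Cardinality"
begin

definition luk :: "nat \<Rightarrow> real set" where
  "luk n = {real k / real n | k. k \<le> n}"

definition lneg :: "real \<Rightarrow> real" where "lneg x = 1 - x"
definition loplus :: "real \<Rightarrow> real \<Rightarrow> real" where "loplus x y = min (x + y) 1"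
definition lodot :: "real \<Rightarrow> real \<Rightarrow> real" where "lodot x y = max (x + y - 1) 0"
definition limp :: "real \<Rightarrow> real \<Rightarrow> real" where "limp x y = min 1 (1 - x + y)"

fun lpow :: "nat \<Rightarrow> real \<Rightarrow> real" where
  "lpow 0 x = 1"
| "lpow (Suc k) x = lodot x (lpow k x)"

definition LF :: "nat \<Rightarrow> ('s \<Rightarrow> real) set" where
  "LF n = {f. \<forall>s. f s \<in> luk n}"

section \<open>L_n-valued effectivity functions (players = the finite type 'p, N = UNIV)\<close>

type_synonym ('p, 's) eff = "'p set \<Rightarrow> ('s \<Rightarrow> real) \<Rightarrow> real"

definition eff_fun :: "nat \<Rightarrow> ('p, 's) eff \<Rightarrow> bool" where
  "eff_fun n E \<longleftrightarrow> (\<forall>C f. f \<in> LF n \<longrightarrow> E C f \<in> luk n)"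

definition outcome_monotonic :: "nat \<Rightarrow> ('p, 's) eff \<Rightarrow> bool" where
  "outcome_monotonic n E \<longleftrightarrow>
     (\<forall>C f g. f \<in> LF n \<longrightarrow> g \<in> LF n \<longrightarrow> (\<forall>s. g s \<le> f s) \<longrightarrow> E C g \<le> E C f)"

definition N_maximal :: "nat \<Rightarrow> ('p, 's) eff \<Rightarrow> bool" where
  "N_maximal n E \<longleftrightarrow> (\<forall>f. f \<in> LF n \<longrightarrow> lneg (E {} (\<lambda>s. lneg (f s))) \<le> E UNIV f)"

definition superadditive :: "nat \<Rightarrow> ('p, 's) eff \<Rightarrow> bool" where
  "superadditive n E \<longleftrightarrow>
     (\<forall>C1 C2 f g. f \<in> LF n \<longrightarrow> g \<in> LF n \<longrightarrow> C1 \<inter> C2 = {} \<longrightarrow>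
        min (E C1 f) (E C2 g) \<le> E (C1 \<union> C2) (\<lambda>s. min (f s) (g s)))"

definition homogeneous :: "nat \<Rightarrow> ('p, 's) eff \<Rightarrow> bool" where
  "homogeneous n E \<longleftrightarrow>
     (\<forall>C f. f \<in> LF n \<longrightarrow>
        E C (\<lambda>s. loplus (f s) (f s)) = loplus (E C f) (E C f) \<and>
        E C (\<lambda>s. lodot (f s) (f s)) = lodot (E C f) (E C f))"

definition liveness :: "('p, 's) eff \<Rightarrow> bool" where
  "liveness E \<longleftrightarrow> (\<forall>C. E C (\<lambda>s. 1) = 1)"

definition safety :: "('p, 's) eff \<Rightarrow> bool" where
  "safety E \<longleftrightarrow> (\<forall>C. E C (\<lambda>s. 0) = 0)"

definition principal :: "nat \<Rightarrow> ('p, 's) eff \<Rightarrow> bool" where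
  "principal n E \<longleftrightarrow>
     (\<exists>g \<in> LF n. \<forall>f \<in> LF n. E {} f = 1 \<longleftrightarrow> (\<forall>s. lpow n (g s) \<le> f s))"

definition playable :: "nat \<Rightarrow> ('p, 's) eff \<Rightarrow> bool" where
  "playable n E \<longleftrightarrow> eff_fun n E \<and> outcome_monotonic n E \<and> N_maximal n E \<and>
     superadditive n E \<and> homogeneous n E \<and> liveness E \<and> safety E"

definition truly_playable :: "nat \<Rightarrow> ('p, 's) eff \<Rightarrow> bool" where
  "truly_playable n E \<longleftrightarrow> playable n E \<and> principal n E"

text \<open>A frame is (S, E) with S the (nonempty) universe of the state type 's.\<close>
type_synonym ('p, 's) frame = "'s \<Rightarrow> ('p, 's) eff"

definition playable_frame :: "nat \<Rightarrow> ('p, 's) frame \<Rightarrow> bool" where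
  "playable_frame n F \<longleftrightarrow> (\<forall>u. playable n (F u))"

definition truly_playable_frame :: "nat \<Rightarrow> ('p, 's) frame \<Rightarrow> bool" where
  "truly_playable_frame n F \<longleftrightarrow> (\<forall>u. truly_playable n (F u))"

text \<open>Prop = nat (countably infinite).\<close>
datatype 'p fm = One | Var nat | Imp "'p fm" "'p fm" | Neg "'p fm" | Box "'p set" "'p fm"

fun val :: "('p, 's) frame \<Rightarrow> ('s \<Rightarrow> nat \<Rightarrow> real) \<Rightarrow> 'p fm \<Rightarrow> 's \<Rightarrow> real" where
  "val F V One u = 1"
| "val F V (Var p) u = V u p"
| "val F V (Imp a b) u = limp (val F V a u) (val F V b u)"
| "val F V (Neg a) u = lneg (val F V a u)"
| "val F V (Box C a) u = F u C (\<lambda>t. val F V a t)"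

definition valid_in_frame :: "nat \<Rightarrow> ('p, 's) frame \<Rightarrow> 'p fm \<Rightarrow> bool" where
  "valid_in_frame n F \<phi> \<longleftrightarrow>
     (\<forall>V. (\<forall>u p. V u p \<in> luk n) \<longrightarrow> (\<forall>u. val F V \<phi> u = 1))"

end

theory Submission
  imports Defs
begin

definition ultra :: "'a filter \<Rightarrow> bool" where
  "ultra U \<longleftrightarrow> U \<noteq> bot \<and> (\<forall>P. eventually P U \<or> eventually (\<lambda>x. \<not> P x) U)"

lemma ex_ultra_below:
  fixes F :: "'a filter"
  assumes F: "F \<noteq> bot"
  shows "\<exists>U\<le>F. ultra U"
proof -
  let ?R = "{(b, a). a \<noteq> bot \<and> a \<le> b \<and> b \<le> F}"
  have bot_notin_R: "c \<in> Chains ?R \<Longrightarrow> bot \<notin> c" for c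
    by (auto simp: Chains_def)
  have FR: "Field ?R = {G. G \<noteq> bot \<and> G \<le> F}"
    by (auto simp: Field_def bot_unique)
  have "\<exists>m\<in>Field ?R. \<forall>a\<in>Field ?R. (m, a) \<in> ?R \<longrightarrow> a = m"
  proof (rule Zorns_po_lemma)
    show "Partial_order ?R"
      by (auto simp: partial_order_on_def preorder_on_def
          antisym_def refl_on_def trans_def Field_def bot_unique)
    show "\<exists>u\<in>Field ?R. \<forall>a\<in>C. (a, u) \<in> ?R" if C: "C \<in> Chains ?R" for C
    proof (simp only: FR, intro bexI ballI)
      have Inf_C: "Inf C \<noteq> bot" "Inf C \<le> F" if "C \<noteq> {}"
      proof -
        from C that have "Inf C = bot \<longleftrightarrow> (\<exists>x\<in>C. x = bot)"
          unfolding trivial_limit_def by (intro eventually_Inf_base) (auto simp: Chains_def)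
        with C show "Inf C \<noteq> bot"
          by (simp add: bot_notin_R)
        from that obtain x where "x \<in> C" by auto
        with C show "Inf C \<le> F"
          by (auto intro!: Inf_lower2[of x] simp: Chains_def)
      qed
      then have eq: "inf F (Inf C) = (if C = {} then F else Inf C)"
        using C by (auto simp add: inf_absorb2)
      show "inf F (Inf C) \<in> {G. G \<noteq> bot \<and> G \<le> F}"
        using eq Inf_C F by auto
      show "(a, inf F (Inf C)) \<in> ?R" if "a \<in> C" for a
        using that C eq Inf_C F by (auto intro: Inf_lower simp: Chains_def)
    qed
  qed
  then obtain U where U: "U \<noteq> bot" "U \<le> F"
    and max: "\<And>G. G \<noteq> bot \<Longrightarrow> G \<le> U \<Longrightarrow> G = U"
    unfolding FR by (auto simp: order_trans)
  have "ultra U"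
    unfolding ultra_def
  proof (intro conjI allI U(1) disjCI)
    fix P
    assume "\<not> eventually (\<lambda>x. \<not> P x) U"
    then have "inf U (Filter.principal {x. P x}) \<noteq> bot"
      by (simp add: trivial_limit_def eventually_inf_principal not_eventually)
    then have "inf U (Filter.principal {x. P x}) = U"
      by (rule max) simp
    moreover have "eventually P (inf U (Filter.principal {x. P x}))"
      by (simp add: eventually_inf_principal)
    ultimately show "eventually P U" by simp
  qed
  with U show ?thesis by auto
qed


lemma ultra_ex:
  assumes "ultra U" "eventually P U" shows "\<exists>x. P x"
proof (rule ccontr)
  assume "\<not> (\<exists>x. P x)"
  then have "P = (\<lambda>_. False)" by auto
  with assms show False by (simp add: ultra_def trivial_limit_def)
qed

lemma fin_ex:
  assumes u: "ultra U" and "finite S"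
  shows "eventually (\<lambda>s. f s \<in> S) U \<Longrightarrow> \<exists>v. eventually (\<lambda>s. f s = v) U"
  using \<open>finite S\<close>
proof (induction S rule: finite_induct)
  case empty
  then show ?case using ultra_ex[OF u] by auto
next
  case (insert a S)
  show ?case
  proof (cases "eventually (\<lambda>s. f s = a) U")
    case True then show ?thesis by blast
  next
    case False
    then have "eventually (\<lambda>s. f s \<noteq> a) U" using u unfolding ultra_def by blast
    with insert.prems have "eventually (\<lambda>s. f s \<in> S) U"
      by (rule eventually_elim2) auto
    then show ?thesis by (rule insert.IH)
  qed
qed

definition lim :: "'a filter \<Rightarrow> ('a \<Rightarrow> real) \<Rightarrow> real" where
  "lim U f = (SOME v. eventually (\<lambda>s. f s = v) U)"

lemma lim_eq:
  assumes u: "ultra U" and "finite (range f)"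
  shows "eventually (\<lambda>s. f s = lim U f) U"
proof -
  have "\<exists>v. eventually (\<lambda>s. f s = v) U"
    by (rule fin_ex[OF u assms(2)]) auto
  then show ?thesis unfolding lim_def by (rule someI_ex)
qed

lemma lim_unique:
  assumes u: "ultra U" and "finite (range f)" and "eventually (\<lambda>s. f s = v) U"
  shows "lim U f = v"
proof -
  have "eventually (\<lambda>s. f s = v \<and> f s = lim U f) U"
    using assms(3) lim_eq[OF u assms(2)] by (rule eventually_conj)
  then show ?thesis using ultra_ex[OF u] by force
qed

lemma fin_comp1: "finite (range f) \<Longrightarrow> finite (range (\<lambda>s. h (f s)))"
  by (metis image_image finite_imageI)

lemma fin_comp2:
  assumes "finite (range f)" "finite (range g)"
  shows "finite (range (\<lambda>s. h (f s) (g s)))"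
proof -
  have "range (\<lambda>s. h (f s) (g s)) \<subseteq> (\<lambda>(x,y). h x y) ` (range f \<times> range g)" by auto
  then show ?thesis using assms by (meson finite_SigmaI finite_imageI finite_subset)
qed

lemma lim_comp1:
  assumes u: "ultra U" and f: "finite (range f)"
  shows "lim U (\<lambda>s. h (f s)) = h (lim U f)"
  by (rule lim_unique[OF u fin_comp1[OF f]]) (rule eventually_mono[OF lim_eq[OF u f]], simp)

lemma lim_comp2:
  assumes u: "ultra U" and f: "finite (range f)" and g: "finite (range g)"
  shows "lim U (\<lambda>s. h (f s) (g s)) = h (lim U f) (lim U g)"
  by (rule lim_unique[OF u fin_comp2[OF f g]])
     (rule eventually_elim2[OF lim_eq[OF u f] lim_eq[OF u g]], simp)

lemma lim_const: "ultra U \<Longrightarrow> lim U (\<lambda>s. c) = c"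
  by (rule lim_unique) auto

lemma luk_finite: "finite (luk n)"
proof -
  have "luk n = (\<lambda>k. real k / real n) ` {..n}" unfolding luk_def by auto
  then show ?thesis by simp
qed

lemma luk_01: "x \<in> luk n \<Longrightarrow> n \<ge> 1 \<Longrightarrow> 0 \<le> x \<and> x \<le> 1"
  unfolding luk_def by auto

lemma luk_0: "0 \<in> luk n" unfolding luk_def by force
lemma luk_1: "n \<ge> 1 \<Longrightarrow> 1 \<in> luk n" unfolding luk_def
  by (rule CollectI, rule exI[of _ n]) simp

lemma LF_fin: "f \<in> LF n \<Longrightarrow> finite (range f)"
  unfolding LF_def using luk_finite by (metis (mono_tags) finite_subset image_subset_iff mem_Collect_eq)

lemma lpow_1: "lpow k 1 = 1"
  by (induction k) (auto simp: lodot_def)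

lemma lpow_le1: "x \<le> 1 \<Longrightarrow> lpow k x \<le> 1"
  by (induction k) (auto simp: lodot_def)

lemma lpow_0: "k \<ge> 1 \<Longrightarrow> lpow k 0 = 0"
proof (induction k)
  case 0 then show ?case by simp
next
  case (Suc k)
  have "lpow k 0 \<le> 1" by (rule lpow_le1) simp
  then show ?case by (simp add: lodot_def)
qed

definition GF :: "'s filter \<Rightarrow> ('p, 's) frame" where
  "GF U = (\<lambda>u C f. lim U f)"

definition FF :: "'s \<Rightarrow> ('p, 's) frame" where
  "FF x0 = (\<lambda>u C f. f x0)"

lemma GF_playable:
  assumes u: "ultra U"
  shows "playable_frame n (GF U :: ('p, 's) frame)"
  unfolding playable_frame_def playable_def
proof (intro allI conjI)
  fix u :: 's
  let ?E = "(GF U :: ('p, 's) frame) u"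
  show "eff_fun n ?E"
    unfolding eff_fun_def GF_def
  proof (intro allI impI)
    fix f :: "'s \<Rightarrow> real" assume f: "f \<in> LF n"
    obtain s where "f s = lim U f" using ultra_ex[OF u lim_eq[OF u LF_fin[OF f]]] by auto
    then show "lim U f \<in> luk n" using f unfolding LF_def by (metis mem_Collect_eq)
  qed
  show "outcome_monotonic n ?E"
    unfolding outcome_monotonic_def GF_def
  proof (intro allI impI)
    fix f g :: "'s \<Rightarrow> real" assume f: "f \<in> LF n" and g: "g \<in> LF n" and le: "\<forall>s. g s \<le> f s"
    obtain s where "f s = lim U f \<and> g s = lim U g"
      using ultra_ex[OF u eventually_conj[OF lim_eq[OF u LF_fin[OF f]] lim_eq[OF u LF_fin[OF g]]]] by auto
    then show "lim U g \<le> lim U f" using le[rule_format, of s] by simp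
  qed
  show "N_maximal n ?E"
    unfolding N_maximal_def GF_def
  proof (intro allI impI)
    fix f :: "'s \<Rightarrow> real" assume f: "f \<in> LF n"
    have "lim U (\<lambda>s. lneg (f s)) = lneg (lim U f)" by (rule lim_comp1[OF u LF_fin[OF f]])
    then show "lneg (lim U (\<lambda>s. lneg (f s))) \<le> lim U f" by (simp add: lneg_def)
  qed
  show "superadditive n ?E"
    unfolding superadditive_def GF_def
  proof (intro allI impI)
    fix f g :: "'s \<Rightarrow> real" and C1 C2 :: "'p set" assume f: "f \<in> LF n" and g: "g \<in> LF n"
    have "lim U (\<lambda>s. min (f s) (g s)) = min (lim U f) (lim U g)"
      by (rule lim_comp2[OF u LF_fin[OF f] LF_fin[OF g]])
    then show "min (lim U f) (lim U g) \<le> lim U (\<lambda>s. min (f s) (g s))" by simp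
  qed
  show "homogeneous n ?E"
    unfolding homogeneous_def GF_def
  proof (intro allI impI conjI)
    fix f :: "'s \<Rightarrow> real" assume f: "f \<in> LF n"
    show "lim U (\<lambda>s. loplus (f s) (f s)) = loplus (lim U f) (lim U f)"
      by (rule lim_comp1[OF u LF_fin[OF f], of "\<lambda>x. loplus x x"])
    show "lim U (\<lambda>s. lodot (f s) (f s)) = lodot (lim U f) (lim U f)"
      by (rule lim_comp1[OF u LF_fin[OF f], of "\<lambda>x. lodot x x"])
  qed
  show "liveness ?E" unfolding liveness_def GF_def using lim_const[OF u] by simp
  show "safety ?E" unfolding safety_def GF_def using lim_const[OF u] by simp
qed

lemma GF_not_principal:
  assumes u: "ultra U" and free: "\<And>b. eventually (\<lambda>s. s \<noteq> b) U" and n: "n \<ge> 1"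
  shows "\<not> principal n ((GF U :: ('p, 's) frame) u)"
proof
  assume "principal n ((GF U :: ('p, 's) frame) u)"
  then obtain g where g: "g \<in> LF n"
    and P: "\<And>f. f \<in> LF n \<Longrightarrow> lim U f = 1 \<longleftrightarrow> (\<forall>s. lpow n (g s) \<le> f s)"
    unfolding principal_def GF_def by blast
  define f0 where "f0 = (\<lambda>s::'s. if lpow n (g s) \<le> 0 then 0 else (1::real))"
  have f0L: "f0 \<in> LF n" unfolding f0_def LF_def using luk_0 luk_1[OF n] by auto
  have "\<forall>s. lpow n (g s) \<le> f0 s"
    using g luk_01[OF _ n] lpow_le1 unfolding f0_def LF_def by fastforce
  then have "lim U f0 = 1" using P[OF f0L] by simp
  then have ev: "eventually (\<lambda>s. f0 s = 1) U" using lim_eq[OF u LF_fin[OF f0L]] by simp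
  then obtain b where "f0 b = 1" using ultra_ex[OF u] by blast
  then have bpos: "lpow n (g b) > 0" unfolding f0_def by (auto split: if_splits)
  define f1 where "f1 = (\<lambda>s. if s = b then 0 else f0 s)"
  have f1L: "f1 \<in> LF n" using f0L luk_0 unfolding f1_def LF_def by auto
  have "eventually (\<lambda>s. f1 s = 1) U"
    using ev free[of b] by (rule eventually_elim2) (simp add: f1_def)
  then have "lim U f1 = 1" by (rule lim_unique[OF u LF_fin[OF f1L]])
  then have "lpow n (g b) \<le> f1 b" using P[OF f1L] by blast
  then show False using bpos by (simp add: f1_def)
qed

lemma FF_truly:
  assumes n: "n \<ge> 1"
  shows "truly_playable_frame n (FF x0 :: ('p, 's) frame)"
  unfolding truly_playable_frame_def truly_playable_def playable_def
proof (intro allI conjI)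
  fix u :: 's
  let ?E = "(FF x0 :: ('p, 's) frame) u"
  show "eff_fun n ?E" unfolding eff_fun_def FF_def LF_def by auto
  show "outcome_monotonic n ?E" unfolding outcome_monotonic_def FF_def by auto
  show "N_maximal n ?E" unfolding N_maximal_def FF_def by (simp add: lneg_def)
  show "superadditive n ?E" unfolding superadditive_def FF_def by auto
  show "homogeneous n ?E" unfolding homogeneous_def FF_def by auto
  show "liveness ?E" unfolding liveness_def FF_def by auto
  show "safety ?E" unfolding safety_def FF_def by auto
  show "principal n ?E"
    unfolding principal_def FF_def
  proof (rule bexI[of _ "\<lambda>s. if s = x0 then 1 else 0"], intro ballI)
    fix f :: "'s \<Rightarrow> real" assume f: "f \<in> LF n"
    have r: "0 \<le> f s \<and> f s \<le> 1" for s using f luk_01[OF _ n] unfolding LF_def by blast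
    show "(f x0 = 1) = (\<forall>s. lpow n (if s = x0 then 1 else 0) \<le> f s)"
    proof
      assume "f x0 = 1" then show "\<forall>s. lpow n (if s = x0 then 1 else 0) \<le> f s"
        using r lpow_1 lpow_0[OF n] by simp
    next
      assume "\<forall>s. lpow n (if s = x0 then 1 else 0) \<le> f s"
      then have "1 \<le> f x0" using lpow_1 by metis
      then show "f x0 = 1" using r[of x0] by simp
    qed
  next
    show "(\<lambda>s. if s = x0 then 1 else 0) \<in> LF n" unfolding LF_def using luk_0 luk_1[OF n] by auto
  qed
qed

definition sw :: "'s \<Rightarrow> 's \<Rightarrow> 's \<Rightarrow> 's" where
  "sw x0 y s = (if s = x0 then y else if s = y then x0 else s)"

lemma sw_sw: "sw x0 y (sw x0 y u) = u" unfolding sw_def by auto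

lemma val_fin:
  assumes "\<forall>u p. V u p \<in> luk n"
  shows "finite (range (val (GF U :: ('p,'s) frame) V \<phi>))"
proof (induction \<phi>)
  case One then show ?case by (simp add: image_def)
next
  case (Var p)
  have "range (\<lambda>u. V u p) \<subseteq> luk n" using assms by auto
  then show ?case using luk_finite by (simp add: finite_subset)
next
  case (Imp a b) then show ?case by (simp add: fin_comp2)
next
  case (Neg a) then show ?case by (simp add: fin_comp1)
next
  case (Box C a) then show ?case by (simp add: GF_def image_def)
qed

lemma transfer:
  assumes u: "ultra U" and V: "\<forall>u p. V u p \<in> luk n"
  shows "eventually (\<lambda>y. \<forall>s. val (FF x0 :: ('p,'s) frame) (\<lambda>s. V (sw x0 y s)) \<phi> s
            = val (GF U) V \<phi> (sw x0 y s)) U"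
proof (induction \<phi>)
  case One then show ?case by simp
next
  case (Var p) then show ?case by simp
next
  case (Imp a b) then show ?case by (rule eventually_elim2) simp
next
  case (Neg a) then show ?case by (rule eventually_mono) simp
next
  case (Box C a)
  show ?case
    using Box lim_eq[OF u val_fin[OF V, of U a]]
  proof (rule eventually_elim2)
    fix y
    assume h: "\<forall>s. val (FF x0 :: ('p,'s) frame) (\<lambda>s. V (sw x0 y s)) a s = val (GF U) V a (sw x0 y s)"
      and l: "val (GF U :: ('p,'s) frame) V a y = lim U (val (GF U) V a)"
    have "sw x0 y x0 = y" unfolding sw_def by simp
    then show "\<forall>s. val (FF x0 :: ('p,'s) frame) (\<lambda>s. V (sw x0 y s)) (Box C a) s =
              val (GF U) V (Box C a) (sw x0 y s)"
      using h l by (simp add: FF_def GF_def)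
  qed
qed

theorem mainTheorem10:
  fixes n :: nat
  assumes "n \<ge> 1"
    and "CARD('p::finite) \<ge> 2"
    and "infinite (UNIV :: 's set)"
  shows "\<not> (\<exists>\<Lambda> :: 'p fm set. \<forall>F :: ('p, 's) frame.
            playable_frame n F \<longrightarrow>
              (truly_playable_frame n F \<longleftrightarrow> (\<forall>\<phi>\<in>\<Lambda>. valid_in_frame n F \<phi>)))"
proof
  assume "\<exists>\<Lambda> :: 'p fm set. \<forall>F :: ('p, 's) frame.
            playable_frame n F \<longrightarrow>
              (truly_playable_frame n F \<longleftrightarrow> (\<forall>\<phi>\<in>\<Lambda>. valid_in_frame n F \<phi>))"
  then obtain \<Lambda> :: "'p fm set" where L: "\<And>F :: ('p, 's) frame.
            playable_frame n F \<Longrightarrow>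
              (truly_playable_frame n F \<longleftrightarrow> (\<forall>\<phi>\<in>\<Lambda>. valid_in_frame n F \<phi>))" by blast
  have cof: "(cofinite :: 's filter) \<noteq> bot" using assms(3) by simp
  obtain U :: "'s filter" where U: "U \<le> cofinite" "ultra U" using ex_ultra_below[OF cof] by blast
  have free: "eventually (\<lambda>s. s \<noteq> b) U" for b
    using U(1) unfolding le_filter_def by (auto simp: eventually_cofinite)
  obtain x0 :: 's where True by simp
  have T: "truly_playable_frame n (FF x0 :: ('p,'s) frame)" by (rule FF_truly[OF assms(1)])
  then have "playable_frame n (FF x0 :: ('p,'s) frame)"
    unfolding truly_playable_frame_def truly_playable_def playable_frame_def by blast
  then have FT: "\<forall>\<phi>\<in>\<Lambda>. valid_in_frame n (FF x0 :: ('p,'s) frame) \<phi>"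
    using L T by blast
  have "\<not> truly_playable_frame n (GF U :: ('p,'s) frame)"
    using GF_not_principal[OF U(2) free assms(1)] unfolding truly_playable_frame_def truly_playable_def
    by blast
  then obtain \<phi> where ph: "\<phi> \<in> \<Lambda>" and nv: "\<not> valid_in_frame n (GF U :: ('p,'s) frame) \<phi>"
    using L[OF GF_playable[OF U(2)]] by blast
  then obtain V u where V: "\<forall>u p. V u p \<in> luk n" and vu: "val (GF U :: ('p,'s) frame) V \<phi> u \<noteq> 1"
    unfolding valid_in_frame_def by blast
  obtain y where y: "\<forall>s. val (FF x0 :: ('p,'s) frame) (\<lambda>s. V (sw x0 y s)) \<phi> s
            = val (GF U) V \<phi> (sw x0 y s)"
    using ultra_ex[OF U(2) transfer[OF U(2) V]] by blast
  have V': "\<forall>u p. (\<lambda>s. V (sw x0 y s)) u p \<in> luk n" using V by blast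
  have "val (FF x0 :: ('p,'s) frame) (\<lambda>s. V (sw x0 y s)) \<phi> (sw x0 y u) = 1"
    using FT ph V' unfolding valid_in_frame_def
    by (metis (no_types, lifting))
  then show False using y vu sw_sw by metis
qed

end
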